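(* Let $k \geq 1$ and let $P \in \mathcal{A}_{2k}$. If $P$ is convex, then $k \leq 2$.
   Context: A polygon $P = \{p_1, \ldots, p_n\}$ in the plane is a cyclic sequence of points (vertices), joined by edges $p_i p_{i+1}$, with indices taken modulo $n$. A polygon is convex if it is a simple closed polygon whose boundary bounds a convex region. Alternating polygons: fix coordinates in the plane. Let $\mathbf{x} = (x_1, \ldots, x_k)$ and $\mathbf{y} = (y_1, \ldots, y_k)$ be vectors in $\mathbb{R}^k$ with $x_i > 0$, $y_i > 0$ for all $i$, and $x_i \neq x_j$, $y_i \neq y_j$ for all $i \neq j$. Let $\sigma = (\sigma_1, \ldots, \sigma_{2k}) \in \{-1, +1\}^{2k}$. The polygon $A(\mathbf{x}, \mathbf{y}, \sigma) = \{p_1, \ldots, p_{2k}\}$ is defined by $p_{2i+1} = (\sigma_{2i+1} x_{i+1}, 0)$ for $i = 0, \ldots, k-1$, and $p_{2i} = (0, \sigma_{2i} y_i)$ for $i = 1, \ldots, k$. The family $\mathcal{A}_{2k}$ consists of all polygons $A(\mathbf{x}, \mathbf{y}, \sigma)$ for all such $\mathbf{x}, \mathbf{y}, \sigma$. *)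

theory Defs
  imports "HOL-Analysis.Analysis"
begin

type_synonym point = "real \<times> real"

fun polygonal_path :: "point list \<Rightarrow> (real \<Rightarrow> point)" where
  "polygonal_path [] = linepath 0 0"
| "polygonal_path [p] = linepath p p"
| "polygonal_path [p, q] = linepath p q"
| "polygonal_path (p # q # r # rest) = linepath p q +++ polygonal_path (q # r # rest)"

definition closed_polygon_path :: "point list \<Rightarrow> (real \<Rightarrow> point)" where
  "closed_polygon_path ps = polygonal_path (ps @ [hd ps])"

definition convex_polygon :: "point list \<Rightarrow> bool" where
  "convex_polygon ps \<longleftrightarrow> ps \<noteq> [] \<and>
     simple_path (closed_polygon_path ps) \<and>
     convex (inside (path_image (closed_polygon_path ps)))"

text \<open>A(x, y, sigma) = [p_1, ..., p_2k], with p_(2i+1) = (sigma_(2i+1) x_(i+1), 0)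
  and p_(2i) = (0, sigma_(2i) y_i); all vectors are 1-indexed.\<close>
definition alt_polygon :: "nat \<Rightarrow> (nat \<Rightarrow> real) \<Rightarrow> (nat \<Rightarrow> real) \<Rightarrow> (nat \<Rightarrow> real) \<Rightarrow> point list" where
  "alt_polygon k x y \<sigma> =
     map (\<lambda>j. if odd j then (\<sigma> j * x ((j + 1) div 2), 0) else (0, \<sigma> j * y (j div 2)))
         [1..<2 * k + 1]"

definition alternating_polygons :: "nat \<Rightarrow> point list set" where
  "alternating_polygons k =
     {alt_polygon k x y \<sigma> | x y \<sigma>.
        (\<forall>i\<in>{1..k}. x i > 0 \<and> y i > 0) \<and>
        inj_on x {1..k} \<and> inj_on y {1..k} \<and>
        (\<forall>j\<in>{1..2*k}. \<sigma> j = -1 \<or> \<sigma> j = 1)}"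

end

theory Submission
  imports Defs
begin

lemma pp_start: "pathstart (polygonal_path (p # rest)) = p"
proof (induction rest arbitrary: p)
  case Nil then show ?case by (simp add: pathstart_def)
next
  case (Cons q rest) then show ?case by (cases rest) auto
qed

lemma pp_finish: "pathfinish (polygonal_path (p # rest)) = last (p # rest)"
proof (induction rest arbitrary: p)
  case Nil then show ?case by (simp add: pathfinish_def)
next
  case (Cons q rest) then show ?case by (cases rest) auto
qed

lemma pp_path: "path (polygonal_path L)"
proof (induction L rule: polygonal_path.induct)
  case (4 p q r rest) then show ?case by (simp add: pp_start)
qed (auto simp: path_def)

lemma pp_verts: "set L \<subseteq> path_image (polygonal_path L)"
proof (induction L rule: polygonal_path.induct)
  case (4 p q r rest)
  then show ?case by (auto simp: path_image_join pp_start)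
qed auto

lemma pp_sub: "length L \<ge> 2 \<Longrightarrow> z \<in> path_image (polygonal_path L) \<Longrightarrow>
   \<exists>i. Suc i < length L \<and> z \<in> closed_segment (L!i) (L!Suc i)"
proof (induction L rule: polygonal_path.induct)
  case (3 p q) then show ?case by (auto intro: exI[of _ 0])
next
  case (4 p q r rest)
  then have "z \<in> closed_segment p q \<or> z \<in> path_image (polygonal_path (q # r # rest))"
    by (auto simp: path_image_join pp_start)
  then show ?case
  proof
    assume "z \<in> closed_segment p q" then show ?case by (auto intro: exI[of _ 0])
  next
    assume "z \<in> path_image (polygonal_path (q # r # rest))"
    with 4 obtain i where "Suc i < length (q#r#rest)" "z \<in> closed_segment ((q#r#rest)!i) ((q#r#rest)!Suc i)"
      by auto
    then show ?case by (intro exI[of _ "Suc i"]) auto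
  qed
qed auto

definition hC :: "real \<times> real \<Rightarrow> complex" where
  "hC p = of_real (fst p) + \<i> * of_real (snd p)"

definition hR :: "complex \<Rightarrow> real \<times> real" where
  "hR z = (Re z, Im z)"

lemma hR_hC [simp]: "hR (hC p) = p" by (simp add: hR_def hC_def)
lemma hC_hR [simp]: "hC (hR z) = z" by (simp add: hR_def hC_def complex_eq_iff)
lemma linear_hC: "linear hC"
  by (rule linearI) (auto simp: hC_def algebra_simps scaleR_conv_of_real)
lemma linear_hR: "linear hR"
  by (rule linearI) (auto simp: hR_def)
lemma inj_hC: "inj hC" by (metis hR_hC injI)
lemma cont_hC: "continuous_on A hC"
  using linear_continuous_on linear_hC linear_conv_bounded_linear by blast
lemma cont_hR: "continuous_on A hR"
  using linear_continuous_on linear_hR linear_conv_bounded_linear by blast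

lemma bounded_hC_iff: "bounded (hC ` X) \<longleftrightarrow> bounded X"
proof
  assume "bounded (hC ` X)"
  then have "bounded (hR ` hC ` X)"
    using bounded_linear_image linear_hR linear_conv_bounded_linear by blast
  then show "bounded X" by (simp add: image_image)
next
  assume "bounded X" then show "bounded (hC ` X)"
    using bounded_linear_image linear_hC linear_conv_bounded_linear by blast
qed

lemma hC_eq_iff: "hC a = hC b \<longleftrightarrow> a = b"
  by (metis hR_hC)

lemma mem_hC_image: "w \<in> hC ` X \<longleftrightarrow> hR w \<in> X"
proof
  assume "w \<in> hC ` X"
  then obtain p where "p \<in> X" "w = hC p" by blast
  then show "hR w \<in> X" by simp
next
  assume "hR w \<in> X"
  then have "hC (hR w) \<in> hC ` X" by (rule imageI)
  then show "w \<in> hC ` X" by simp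
qed

lemma mem_hR_image: "p \<in> hR ` Y \<longleftrightarrow> hC p \<in> Y"
proof
  assume "p \<in> hR ` Y"
  then obtain w where "w \<in> Y" "p = hR w" by blast
  then show "hC p \<in> Y" by simp
next
  assume "hC p \<in> Y"
  then have "hR (hC p) \<in> hR ` Y" by (rule imageI)
  then show "p \<in> hR ` Y" by simp
qed

lemma inside_hC: "inside (hC ` S) = hC ` inside S"
proof -
  have hom: "homeomorphism (-S) (-(hC ` S)) hC hR"
    unfolding homeomorphism_def
  proof (intro conjI)
    show "hC ` (- S) = - hC ` S"
      by (rule set_eqI) (simp add: mem_hC_image)
    show "hR ` (- hC ` S) = - S"
      by (rule set_eqI) (simp add: mem_hR_image mem_hC_image)
  qed (auto intro: cont_hC cont_hR)
  have cc: "connected_component_set (-(hC ` S)) (hC y) = hC ` connected_component_set (-S) y"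
    if "y \<notin> S" for y
    using connected_component_set_homeomorphism[OF hom, of y] that by blast
  have "hC y \<in> inside (hC ` S) \<longleftrightarrow> y \<in> inside S" for y
  proof (cases "y \<in> S")
    case True
    then have "hC y \<in> hC ` S" by blast
    then show ?thesis using True unfolding inside_def by blast
  next
    case False
    then have "hC y \<notin> hC ` S" by (simp add: mem_hC_image)
    then show ?thesis using False cc[OF False] unfolding inside_def
      by (simp add: bounded_hC_iff)
  qed
  then show ?thesis
    by (intro set_eqI) (metis hC_hR mem_hC_image)
qed

lemma jordan_closure:
  fixes c :: "real \<Rightarrow> real \<times> real"
  assumes "simple_path c" "pathfinish c = pathstart c"
  shows "path_image c \<subseteq> closure (inside (path_image c))"
proof -
  have sp: "simple_path (hC \<circ> c)"
    using simple_path_linear_image_eq[OF linear_hC inj_hC] assms(1) by simp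
  have "pathfinish (hC \<circ> c) = pathstart (hC \<circ> c)"
    using assms(2) by (simp add: pathfinish_compose pathstart_compose)
  from Jordan_inside_outside[OF sp this]
  have "frontier (inside (hC ` path_image c)) = hC ` path_image c"
    by (simp add: path_image_compose)
  then have "hC ` path_image c \<subseteq> closure (hC ` inside (path_image c))"
    by (metis frontier_def Diff_subset inside_hC)
  also have "\<dots> = hC ` closure (inside (path_image c))"
    using closure_injective_linear_image[OF linear_hC inj_hC] by simp
  finally show ?thesis using inj_hC by (auto dest: injD)
qed

lemma seg_axis:
  fixes A B z :: "real \<times> real"
  assumes "snd A = 0" "fst B = 0" "snd B \<noteq> 0" "z \<in> closed_segment A B" "snd z = 0"
  shows "z = A"
proof -
  obtain u where u: "z = (1 - u) *\<^sub>R A + u *\<^sub>R B"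
    using assms(4) by (auto simp: closed_segment_def)
  then have "snd z = u * snd B" using assms(1) by simp
  then have "u = 0" using assms(3,5) by simp
  then show ?thesis using u by simp
qed

lemma core:
  fixes C :: "(real \<times> real) set"
  assumes cv: "convex (inside C)" and sub: "C \<subseteq> closure (inside C)" and cl: "closed C"
    and fin: "finite {t. (t, 0) \<in> C}"
    and lo: "(lo, 0) \<in> C" and mid: "(mid, 0) \<in> C" and hi: "(hi, 0) \<in> C"
    and o1: "lo < mid" and o2: "mid < hi"
  shows False
proof -
  let ?I = "inside C"
  have opI: "open ?I" by (rule open_inside[OF cl])
  have clo: "closure ?I \<subseteq> ?I \<union> C"
    using frontier_inside_subset[OF cl] closure_Un_frontier by blast
  have cvc: "convex (closure ?I)" using cv convex_closure by blast
  have inI: "(t, 0) \<in> ?I" if "lo < t" "t < hi" "(t, 0) \<notin> C" for t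
  proof -
    define u where "u = (hi - t) / (hi - lo)"
    have "(1 - u) *\<^sub>R (hi, 0) + u *\<^sub>R (lo, 0) \<in> closure ?I"
      using cvc sub hi lo that o1 o2 unfolding u_def
      by (intro convexD_alt) (auto simp: field_simps)
    moreover have "(1 - u) *\<^sub>R (hi, 0) + u *\<^sub>R (lo, (0::real)) = (t, 0)"
    proof -
      have "u * (hi - lo) = hi - t" using o1 o2 unfolding u_def by simp
      then show ?thesis by (simp add: algebra_simps)
    qed
    ultimately show ?thesis using clo that by auto
  qed
  obtain t1 where t1: "t1 \<in> {lo<..<mid}" "t1 \<notin> {t. (t, 0) \<in> C}"
    using infinite_imp_nonempty[OF Diff_infinite_finite[OF fin infinite_Ioo[OF o1]]] by blast
  obtain t2 where t2: "t2 \<in> {mid<..<hi}" "t2 \<notin> {t. (t, 0) \<in> C}"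
    using infinite_imp_nonempty[OF Diff_infinite_finite[OF fin infinite_Ioo[OF o2]]] by blast
  have i1: "(t1, 0) \<in> ?I" using t1 o2 by (intro inI) auto
  have i2: "(t2, 0) \<in> ?I" using t2 o1 by (intro inI) auto
  define u where "u = (t2 - mid) / (t2 - t1)"
  have "(1 - u) *\<^sub>R (t2, 0) + u *\<^sub>R (t1, 0) \<in> ?I"
    using cv i1 i2 t1 t2 unfolding u_def
    by (intro convexD_alt) (auto simp: field_simps)
  moreover have "(1 - u) *\<^sub>R (t2, 0) + u *\<^sub>R (t1, (0::real)) = (mid, 0)"
  proof -
    have "u * (t2 - t1) = t2 - mid" using t1 t2 unfolding u_def by simp
    then show ?thesis by (simp add: algebra_simps)
  qed
  ultimately have "(mid, 0) \<in> ?I" by simp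
  then show False using mid inside_no_overlap[of C] by (metis IntI empty_iff)
qed

lemma lemma1:
  fixes k :: nat and P :: "point list"
  assumes "k \<ge> 1"
    and "P \<in> alternating_polygons k"
    and "convex_polygon P"
  shows "k \<le> 2"
proof (rule ccontr)
  assume "\<not> k \<le> 2"
  then have k3: "k \<ge> 3" by simp
  obtain x y \<sigma> where P: "P = alt_polygon k x y \<sigma>"
    and pos: "\<forall>i\<in>{1..k}. x i > 0 \<and> y i > 0"
    and injx: "inj_on x {1..k}"
    and sg: "\<forall>j\<in>{1..2*k}. \<sigma> j = -1 \<or> \<sigma> j = 1"
    using assms(2) unfolding alternating_polygons_def by blast
  define f where "f = (\<lambda>j. if odd j then (\<sigma> j * x ((j + 1) div 2), 0) else (0, \<sigma> j * y (j div 2)))"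
  have Pf: "P = map f [1..<2 * k + 1]" using P by (simp add: alt_polygon_def f_def)
  define L where "L = P @ [hd P]"
  have lenP: "length P = 2 * k" using Pf by simp
  have Pne: "P \<noteq> []" using lenP k3 by auto
  have Pi: "P ! i = f (i + 1)" if "i < 2 * k" for i using that unfolding Pf by (simp del: upt_Suc)
  have hdP: "hd P = f 1" using Pf k3 by (simp add: upt_rec)
  have lenL: "length L = 2 * k + 1" using lenP L_def by simp
  have Li: "L ! i = f (i + 1)" if "i < 2 * k" for i
    using that Pi lenP L_def by (simp add: nth_append)
  have Lk: "L ! (2 * k) = f 1" using lenP hdP L_def by (simp add: nth_append)
  have fodd: "snd (f j) = 0" if "odd j" for j using that f_def by simp
  have feven: "fst (f j) = 0 \<and> snd (f j) \<noteq> 0" if "even j" "1 \<le> j" "j \<le> 2 * k" for j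
  proof -
    have "j div 2 \<in> {1..k}" using that by auto
    then have "y (j div 2) > 0" using pos by blast
    moreover have "\<sigma> j \<noteq> 0" using sg that by force
    ultimately show ?thesis using that f_def by simp
  qed
  let ?c = "closed_polygon_path P"
  let ?C = "path_image ?c"
  have cp: "convex_polygon P" by fact
  then have sp: "simple_path ?c" and cvx: "convex (inside ?C)"
    unfolding convex_polygon_def by auto
  have cL: "?c = polygonal_path L" by (simp add: closed_polygon_path_def L_def)
  have closedc: "pathfinish ?c = pathstart ?c"
  proof -
    obtain p rest where "L = p # rest" using lenL by (cases L) auto
    moreover have "hd L = hd P" "last L = hd P" using Pne L_def by auto
    ultimately show ?thesis unfolding cL by (simp add: pp_start pp_finish)
  qed
  have sub: "?C \<subseteq> closure (inside ?C)" by (rule jordan_closure[OF sp closedc])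
  have cl: "closed ?C" using sp by (simp add: closed_path_image simple_path_imp_path)
  have fin: "finite {t. (t, 0) \<in> ?C}"
  proof (rule finite_subset)
    show "{t. (t, 0) \<in> ?C} \<subseteq> fst ` set L"
    proof
      fix t assume "t \<in> {t. (t, 0) \<in> ?C}"
      then have tC: "(t, 0) \<in> path_image (polygonal_path L)" using cL by simp
      obtain i where i: "Suc i < length L" "(t, 0) \<in> closed_segment (L!i) (L!Suc i)"
      proof -
        have "2 \<le> length L" using lenL k3 by simp
        from pp_sub[OF this tC] show ?thesis using that by blast
      qed
      have "(t, (0::real)) = L!i \<or> (t, 0) = L!Suc i"
      proof (cases "even i")
        case True
        then have "Suc i < 2 * k" using i lenL by presburger
        then have "L!i = f (i+1)" "L!Suc i = f (i + 2)" using Li[of i] Li[of "Suc i"] by auto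
        moreover have "snd (f (i+1)) = 0" using True fodd by simp
        moreover have "fst (f (i+2)) = 0 \<and> snd (f (i+2)) \<noteq> 0"
          using True \<open>Suc i < 2 * k\<close> by (intro feven) auto
        ultimately have "(t, 0) = f (i+1)" using seg_axis[of "f (i+1)" "f (i+2)" "(t,0)"] i(2) by simp
        then show ?thesis using \<open>L!i = f (i+1)\<close> by simp
      next
        case False
        have "i < 2 * k" using i lenL by simp
        then have A: "L!i = f (i+1)" using Li by blast
        have "fst (f (i+1)) = 0 \<and> snd (f (i+1)) \<noteq> 0"
          using False i lenL by (intro feven) auto
        moreover have "snd (L!Suc i) = 0"
        proof (cases "Suc i < 2 * k")
          case True then show ?thesis using Li False fodd by simp
        next
          case False then have "Suc i = 2 * k" using i lenL by simp
          then show ?thesis using Lk fodd by simp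
        qed
        moreover have "(t, 0) \<in> closed_segment (L!Suc i) (L!i)"
          using i(2) by (simp add: closed_segment_commute)
        ultimately have "(t, 0) = L!Suc i" using seg_axis[of "L!Suc i" "L!i" "(t,0)"] A by simp
        then show ?thesis by simp
      qed
      moreover have "L!i \<in> set L" "L!Suc i \<in> set L" using i(1) by simp_all
      ultimately have "(t, 0) \<in> set L" by auto
      then show "t \<in> fst ` set L" by force
    qed
  qed simp
  have vert: "f j \<in> ?C" if "1 \<le> j" "j \<le> 2 * k" for j
  proof -
    have "f j \<in> set P" unfolding Pf using that by (auto simp del: upt_Suc)
    then show ?thesis using pp_verts[of L] cL L_def by auto
  qed
  have sabs: "\<bar>\<sigma> j * x i\<bar> = x i" if "j \<in> {1..2*k}" "i \<in> {1..k}" for i j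
  proof -
    have "\<sigma> j = -1 \<or> \<sigma> j = 1" using sg that by blast
    moreover have "x i > 0" using pos that by blast
    ultimately show ?thesis by auto
  qed
  define a where "a = \<sigma> 1 * x 1"
  define b where "b = \<sigma> 3 * x 2"
  define c where "c = \<sigma> 5 * x 3"
  have A: "(a, 0) \<in> ?C" using vert[of 1] k3 by (simp add: f_def a_def)
  have B: "(b, 0) \<in> ?C" using vert[of 3] k3 by (simp add: f_def b_def)
  have Cc: "(c, 0) \<in> ?C" using vert[of 5] k3 by (simp add: f_def c_def)
  have aa: "\<bar>a\<bar> = x 1" "\<bar>b\<bar> = x 2" "\<bar>c\<bar> = x 3"
    unfolding a_def b_def c_def using k3 by (auto intro!: sabs)
  have "x 1 \<noteq> x 2" using inj_onD[OF injx, of 1 2] k3 by auto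
  moreover have "x 2 \<noteq> x 3" using inj_onD[OF injx, of 2 3] k3 by auto
  moreover have "x 1 \<noteq> x 3" using inj_onD[OF injx, of 1 3] k3 by auto
  ultimately have d: "a \<noteq> b" "b \<noteq> c" "a \<noteq> c" using aa by auto
  have K: "\<And>lo mid hi. (lo, 0) \<in> ?C \<Longrightarrow> (mid, 0) \<in> ?C \<Longrightarrow> (hi, 0) \<in> ?C \<Longrightarrow> lo < mid \<Longrightarrow> mid < hi \<Longrightarrow> False"
    using core[OF cvx sub cl fin] by blast
  show False
  proof (cases a b rule: linorder_cases)
    case less
    then show False
    proof (cases b c rule: linorder_cases)
      case less then show False using K[OF A B Cc] \<open>a < b\<close> by blast
    next
      case equal then show False using d by blast
    next
      case greater
      then show False
      proof (cases a c rule: linorder_cases)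
        case less then show False using K[OF A Cc B] \<open>b > c\<close> by blast
      next
        case equal then show False using d by blast
      next
        case greater then show False using K[OF Cc A B] \<open>a < b\<close> by blast
      qed
    qed
  next
    case equal then show False using d by blast
  next
    case greater
    then show False
    proof (cases a c rule: linorder_cases)
      case less then show False using K[OF B A Cc] \<open>b < a\<close> by blast
    next
      case equal then show False using d by blast
    next
      case greater
      then show False
      proof (cases b c rule: linorder_cases)
        case less then show False using K[OF B Cc A] \<open>c < a\<close> by blast
      next
        case equal then show False using d by blast
      next
        case greater then show False using K[OF Cc B A] \<open>b < a\<close> by blast
      qed
    qed
  qed
qed

end
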